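(* There exist a subgroup $F$ of $\mathrm{SL}_3(\mathbb{Z})$ which is free on two generators, a linear form $f: \mathbb{Q}^3 \to \mathbb{Q}$ with rational coefficients, and a vector $u \in \mathbb{Q}^3$, such that for all $g \in F$: (1) $f(gu) \ge 0$, and (2) $f(gu) = 0$ if and only if $g = 1$. *)

theory Defs
  imports "HOL-Analysis.Analysis"
begin

text \<open>SL_3(Z), realised inside the 3x3 rational matrices (so that it acts on Q^3).\<close>
definition SL3Z :: "(rat^3^3) set" where
  "SL3Z = {A. (\<forall>i j. A $ i $ j \<in> \<int>) \<and> det A = 1}"

definition subgroup_SL3Z :: "(rat^3^3) set \<Rightarrow> bool" where
  "subgroup_SL3Z F \<longleftrightarrow> F \<subseteq> SL3Z \<and> mat 1 \<in> F \<and>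
     (\<forall>g\<in>F. \<forall>h\<in>F. g ** h \<in> F) \<and> (\<forall>g\<in>F. matrix_inv g \<in> F)"

text \<open>Words in two letters: a letter is (which generator, inverted?);
  True = first generator a, False = second generator b.\<close>
fun letter_eval :: "rat^3^3 \<Rightarrow> rat^3^3 \<Rightarrow> bool \<times> bool \<Rightarrow> rat^3^3" where
  "letter_eval a b (x, e) = (let g = (if x then a else b) in if e then matrix_inv g else g)"

definition word_eval :: "rat^3^3 \<Rightarrow> rat^3^3 \<Rightarrow> (bool \<times> bool) list \<Rightarrow> rat^3^3" where
  "word_eval a b w = foldr (\<lambda>l M. letter_eval a b l ** M) w (mat 1)"

definition reduced_word :: "(bool \<times> bool) list \<Rightarrow> bool" where
  "reduced_word w \<longleftrightarrow> (\<forall>i. Suc i < length w \<longrightarrow>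
      \<not> (fst (w ! i) = fst (w ! Suc i) \<and> snd (w ! i) \<noteq> snd (w ! Suc i)))"

definition free_on_two :: "(rat^3^3) set \<Rightarrow> rat^3^3 \<Rightarrow> rat^3^3 \<Rightarrow> bool" where
  "free_on_two F a b \<longleftrightarrow> F = range (word_eval a b) \<and>
     (\<forall>w. reduced_word w \<and> w \<noteq> [] \<longrightarrow> word_eval a b w \<noteq> mat 1)"

end

theory Submission
  imports Defs
begin

definition MA :: "rat^3^3" where
  "MA = vector[vector[1,6,9], vector[0,1,3], vector[0,0,1]]"
definition MAi :: "rat^3^3" where
  "MAi = vector[vector[1,-6,9], vector[0,1,-3], vector[0,0,1]]"
definition MB :: "rat^3^3" where
  "MB = vector[vector[1,0,0], vector[3,1,0], vector[9,6,1]]"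
definition MBi :: "rat^3^3" where
  "MBi = vector[vector[1,0,0], vector[-3,1,0], vector[9,-6,1]]"

definition vec3 :: "rat \<Rightarrow> rat \<Rightarrow> rat^3" where
  "vec3 p q = vector[p^2, p*q, q^2]"

lemmas mm = matrix_matrix_mult_def vec_eq_iff forall_3 sum_3 mat_def
  MA_def MAi_def MB_def MBi_def

lemma inv_eq:
  fixes A B :: "rat^3^3"
  assumes "A ** B = mat 1" "B ** A = mat 1"
  shows "matrix_inv A = B"
proof -
  let ?C = "matrix_inv A"
  have "A ** ?C = mat 1 \<and> ?C ** A = mat 1"
    unfolding matrix_inv_def by (rule someI[of _ B]) (use assms in auto)
  then have "?C = (B ** A) ** ?C" by (simp add: assms)
  also have "\<dots> = B ** (A ** ?C)" by (simp add: matrix_mul_assoc)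
  also have "\<dots> = B" using \<open>A ** ?C = mat 1 \<and> ?C ** A = mat 1\<close> by simp
  finally show ?thesis .
qed

lemma AAi: "MA ** MAi = mat 1" "MAi ** MA = mat 1"
  by (simp_all add: mm)
lemma BBi: "MB ** MBi = mat 1" "MBi ** MB = mat 1"
  by (simp_all add: mm)

lemma invA: "matrix_inv MA = MAi" by (rule inv_eq) (simp_all add: AAi)
lemma invB: "matrix_inv MB = MBi" by (rule inv_eq) (simp_all add: BBi)

lemma letters:
  "letter_eval MA MB (True, False) = MA"
  "letter_eval MA MB (True, True) = MAi"
  "letter_eval MA MB (False, False) = MB"
  "letter_eval MA MB (False, True) = MBi"
  by (simp_all add: invA invB)

lemma actions:
  "MA *v vec3 p q = vec3 (p + 3*q) q"
  "MAi *v vec3 p q = vec3 (p - 3*q) q"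
  "MB *v vec3 p q = vec3 p (3*p + q)"
  "MBi *v vec3 p q = vec3 p (q - 3*p)"
  by (simp_all add: matrix_vector_mult_def vec_eq_iff forall_3 sum_3 vec3_def
      MA_def MAi_def MB_def MBi_def algebra_simps power2_eq_square)


fun Inv :: "bool \<times> bool \<Rightarrow> rat \<Rightarrow> rat \<Rightarrow> bool" where
  "Inv (True, False) p q = (\<bar>p\<bar> > \<bar>q\<bar> \<and> p*q \<ge> 0)"
| "Inv (True, True) p q = (\<bar>p\<bar> > \<bar>q\<bar> \<and> p*q \<le> 0)"
| "Inv (False, False) p q = (\<bar>q\<bar> > \<bar>p\<bar> \<and> p*q \<ge> 0)"
| "Inv (False, True) p q = (\<bar>q\<bar> > \<bar>p\<bar> \<and> p*q \<le> 0)"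

lemma ar1: "\<bar>(p::rat)\<bar> > \<bar>q\<bar> \<Longrightarrow> p*q \<ge> 0 \<Longrightarrow> \<bar>p+3*q\<bar> > \<bar>q\<bar> \<and> (p+3*q)*q \<ge> 0"
  by (cases "p \<ge> 0"; cases "q \<ge> 0") (auto simp: algebra_simps mult_le_0_iff zero_le_mult_iff)
lemma arq: "\<bar>(p::rat)\<bar> < \<bar>q\<bar> \<Longrightarrow> \<bar>p*q\<bar> \<le> q*q"
proof -
  assume h: "\<bar>p\<bar> < \<bar>q\<bar>"
  have "\<bar>p\<bar>*\<bar>q\<bar> \<le> \<bar>q\<bar>*\<bar>q\<bar>" using h by (intro mult_right_mono) auto
  then show ?thesis by (simp add: abs_mult)
qed
lemma ar2: "\<bar>(p::rat)\<bar> < \<bar>q\<bar> \<Longrightarrow> \<bar>p+3*q\<bar> > \<bar>q\<bar> \<and> (p+3*q)*q \<ge> 0"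
proof -
  assume h: "\<bar>p\<bar> < \<bar>q\<bar>"
  have "\<bar>p*q\<bar> \<le> q*q" using arq[OF h] .
  moreover have "q*q \<ge> 0" by simp
  ultimately have "(p+3*q)*q \<ge> 0" by (simp add: algebra_simps abs_le_iff)
  moreover have "\<bar>p+3*q\<bar> > \<bar>q\<bar>" using h by linarith
  ultimately show ?thesis by simp
qed
lemma ar3: "\<bar>(p::rat)\<bar> > \<bar>q\<bar> \<Longrightarrow> p*q \<le> 0 \<Longrightarrow> \<bar>p-3*q\<bar> > \<bar>q\<bar> \<and> (p-3*q)*q \<le> 0"
proof -
  assume a: "\<bar>p\<bar> > \<bar>q\<bar>" "p*q \<le> 0"
  have "\<bar>p\<bar> > \<bar>-q\<bar>" "p*(-q) \<ge> 0" using a by simp_all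
  from ar1[OF this] have "\<bar>p-3*q\<bar> > \<bar>q\<bar>" "(p-3*q)*(-q) \<ge> 0" by simp_all
  then show ?thesis by (simp add: mult.commute)
qed

lemma ar4: "\<bar>(p::rat)\<bar> < \<bar>q\<bar> \<Longrightarrow> \<bar>p-3*q\<bar> > \<bar>q\<bar> \<and> (p-3*q)*q \<le> 0"
  using ar2[of p "-q"] by (simp add: algebra_simps)

lemma ar2': "\<bar>(p::rat)\<bar> > \<bar>q\<bar> \<Longrightarrow> \<bar>3*p+q\<bar> > \<bar>p\<bar> \<and> p*(3*p+q) \<ge> 0"
proof -
  assume a: "\<bar>p\<bar> > \<bar>q\<bar>"
  from ar2[OF a] have "\<bar>q+3*p\<bar> > \<bar>p\<bar>" "(q+3*p)*p \<ge> 0" by simp_all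
  then show ?thesis by (simp add: mult.commute add.commute)
qed

lemma ar1': "\<bar>(p::rat)\<bar> < \<bar>q\<bar> \<Longrightarrow> p*q \<ge> 0 \<Longrightarrow> \<bar>3*p+q\<bar> > \<bar>p\<bar> \<and> p*(3*p+q) \<ge> 0"
proof -
  assume a: "\<bar>p\<bar> < \<bar>q\<bar>" "p*q \<ge> 0"
  have "q*p \<ge> 0" using a by (simp add: mult.commute)
  from ar1[OF a(1) this] have "\<bar>q+3*p\<bar> > \<bar>p\<bar>" "(q+3*p)*p \<ge> 0" by simp_all
  then show ?thesis by (simp add: mult.commute add.commute)
qed

lemma ar4': "\<bar>(p::rat)\<bar> > \<bar>q\<bar> \<Longrightarrow> \<bar>q-3*p\<bar> > \<bar>p\<bar> \<and> p*(q-3*p) \<le> 0"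
proof -
  assume a: "\<bar>p\<bar> > \<bar>q\<bar>"
  from ar4[OF a] have "\<bar>q-3*p\<bar> > \<bar>p\<bar>" "(q-3*p)*p \<le> 0" by simp_all
  then show ?thesis by (simp add: mult.commute)
qed

lemma ar3': "\<bar>(p::rat)\<bar> < \<bar>q\<bar> \<Longrightarrow> p*q \<le> 0 \<Longrightarrow> \<bar>q-3*p\<bar> > \<bar>p\<bar> \<and> p*(q-3*p) \<le> 0"
proof -
  assume a: "\<bar>p\<bar> < \<bar>q\<bar>" "p*q \<le> 0"
  have "q*p \<le> 0" using a by (simp add: mult.commute)
  from ar3[OF a(1) this] have "\<bar>q-3*p\<bar> > \<bar>p\<bar>" "(q-3*p)*p \<le> 0" by simp_all
  then show ?thesis by (simp add: mult.commute)
qed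

lemma word_nil[simp]: "word_eval a b [] = mat 1"
  by (simp add: word_eval_def)

lemma word_cons: "word_eval a b (l # w) = letter_eval a b l ** word_eval a b w"
  by (simp add: word_eval_def)

lemma word_append: "word_eval a b (v @ w) = word_eval a b v ** word_eval a b w"
  by (induction v) (simp_all add: word_cons matrix_mul_assoc)

lemma reduced_tail: "reduced_word (l # w) \<Longrightarrow> reduced_word w"
  unfolding reduced_word_def
proof (intro allI impI)
  fix i assume h: "\<forall>i. Suc i < length (l # w) \<longrightarrow>
        \<not> (fst ((l # w) ! i) = fst ((l # w) ! Suc i) \<and> snd ((l # w) ! i) \<noteq> snd ((l # w) ! Suc i))"
    and i: "Suc i < length w"
  from h[rule_format, of "Suc i"] i
  show "\<not> (fst (w ! i) = fst (w ! Suc i) \<and> snd (w ! i) \<noteq> snd (w ! Suc i))" by simp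
qed

lemma reduced_head: "reduced_word (l # l' # w) \<Longrightarrow> \<not> (fst l = fst l' \<and> snd l \<noteq> snd l')"
  unfolding reduced_word_def by (drule spec[of _ 0]) simp

lemma stepA: "Inv l' p q \<Longrightarrow> l' \<noteq> (True, True) \<Longrightarrow> Inv (True, False) (p+3*q) q"
  apply (cases l') apply (rename_tac x' e') apply (case_tac x'; case_tac e') by (simp_all add: ar1 ar2)
lemma stepAi: "Inv l' p q \<Longrightarrow> l' \<noteq> (True, False) \<Longrightarrow> Inv (True, True) (p-3*q) q"
  apply (cases l') apply (rename_tac x' e') apply (case_tac x'; case_tac e') by (simp_all add: ar3 ar4)
lemma stepB: "Inv l' p q \<Longrightarrow> l' \<noteq> (False, True) \<Longrightarrow> Inv (False, False) p (3*p+q)"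
  apply (cases l') apply (rename_tac x' e') apply (case_tac x'; case_tac e') by (simp_all add: ar1' ar2')
lemma stepBi: "Inv l' p q \<Longrightarrow> l' \<noteq> (False, False) \<Longrightarrow> Inv (False, True) p (q-3*p)"
  apply (cases l') apply (rename_tac x' e') apply (case_tac x'; case_tac e') by (simp_all add: ar3' ar4')

lemma exv: "P a b \<Longrightarrow> \<exists>p q. vec3 a b = vec3 p q \<and> P p q" by blast

lemma step: "Inv l' p q \<Longrightarrow> \<not> (fst l = fst l' \<and> snd l \<noteq> snd l') \<Longrightarrow>
   \<exists>p' q'. letter_eval MA MB l *v vec3 p q = vec3 p' q' \<and> Inv l p' q'"
proof -
  assume h: "Inv l' p q" "\<not> (fst l = fst l' \<and> snd l \<noteq> snd l')"
  obtain x e where l: "l = (x, e)" by fastforce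
  show ?thesis
  proof (cases x; cases e)
    assume "x" "e"
    have "l' \<noteq> (True, False)" using h l \<open>x\<close> \<open>e\<close> by auto
    from stepAi[OF h(1) this] show ?thesis using l \<open>x\<close> \<open>e\<close>
      by (simp add: invA invB actions exv)
  next
    assume "x" "\<not>e"
    have "l' \<noteq> (True, True)" using h l \<open>x\<close> \<open>\<not>e\<close> by auto
    from stepA[OF h(1) this] show ?thesis using l \<open>x\<close> \<open>\<not>e\<close>
      by (simp add: invA invB actions exv)
  next
    assume "\<not>x" "e"
    have "l' \<noteq> (False, False)" using h l \<open>\<not>x\<close> \<open>e\<close> by auto
    from stepBi[OF h(1) this] show ?thesis using l \<open>\<not>x\<close> \<open>e\<close>
      by (simp add: invA invB actions exv)
  next
    assume "\<not>x" "\<not>e"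
    have "l' \<noteq> (False, True)" using h l \<open>\<not>x\<close> \<open>\<not>e\<close> by auto
    from stepB[OF h(1) this] show ?thesis using l \<open>\<not>x\<close> \<open>\<not>e\<close>
      by (simp add: invA invB actions exv)
  qed
qed

definition uu :: "rat^3" where "uu = vec3 1 1"

lemma main:
  "reduced_word w \<Longrightarrow> w \<noteq> [] \<Longrightarrow>
     \<exists>p q. word_eval MA MB w *v uu = vec3 p q \<and> Inv (hd w) p q"
proof (induction w)
  case Nil
  then show ?case by simp
next
  case (Cons l w)
  obtain x e where l: "l = (x, e)" by fastforce
  show ?case
  proof (cases w)
    case Nil
    have "word_eval MA MB [l] = letter_eval MA MB l" by (simp add: word_eval_def)
    then show ?thesis using Nil l
      by (cases x; cases e) (simp_all add: invA invB actions uu_def word_eval_def; rule exv; simp)+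
  next
    case (Cons l' w')
    obtain x' e' where l': "l' = (x', e')" by fastforce
    from Cons.IH obtain p q where pq: "word_eval MA MB w *v uu = vec3 p q" "Inv (hd w) p q"
      using reduced_tail[OF Cons.prems(1)] Cons by auto
    have nc: "\<not> (fst l = fst l' \<and> snd l \<noteq> snd l')" using reduced_head[of l l' w'] Cons.prems(1) Cons by simp
    have ev: "word_eval MA MB (l # w) *v uu = letter_eval MA MB l *v vec3 p q"
      by (simp add: word_cons matrix_vector_mul_assoc[symmetric] pq)
    show ?thesis using step[of l' p q l] pq(2) nc Cons unfolding ev by auto
  qed
qed

lemma cancel: "fst l = fst l' \<Longrightarrow> snd l \<noteq> snd l' \<Longrightarrow>
   letter_eval MA MB l ** letter_eval MA MB l' = mat 1"
  apply (cases l; cases l')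
  apply (rename_tac x e x' e')
  apply (case_tac x; case_tac e; case_tac e')
  by (simp_all add: invA invB AAi BBi)

lemma reduce: "\<exists>v. reduced_word v \<and> word_eval MA MB v = word_eval MA MB w"
proof (induction w rule: length_induct)
  case (1 w)
  show ?case
  proof (cases "reduced_word w")
    case True then show ?thesis by blast
  next
    case False
    then obtain i where i: "Suc i < length w"
      "fst (w ! i) = fst (w ! Suc i)" "snd (w ! i) \<noteq> snd (w ! Suc i)"
      unfolding reduced_word_def by blast
    have w: "w = take i w @ (w ! i) # (w ! Suc i) # drop (Suc (Suc i)) w"
      using i(1) by (metis Cons_nth_drop_Suc Suc_lessD append_take_drop_id)
    let ?v = "take i w @ drop (Suc (Suc i)) w"
    have len: "length ?v < length w" using i(1) by simp
    have "word_eval MA MB w = word_eval MA MB (take i w) **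
        ((letter_eval MA MB (w ! i) ** letter_eval MA MB (w ! Suc i)) ** word_eval MA MB (drop (Suc (Suc i)) w))"
      by (subst w) (simp add: word_append word_cons matrix_mul_assoc)
    also have "\<dots> = word_eval MA MB ?v" using cancel[OF i(2) i(3)]
      by (simp add: word_append)
    finally show ?thesis using "1.IH" len by metis
  qed
qed

definition winv :: "(bool \<times> bool) list \<Rightarrow> (bool \<times> bool) list" where
  "winv w = rev (map (\<lambda>(x, e). (x, \<not> e)) w)"

lemma winv_cons: "winv (l # w) = winv w @ [(fst l, \<not> snd l)]"
  by (cases l) (simp add: winv_def)

lemma word_single: "word_eval a b [l] = letter_eval a b l"
  by (simp add: word_eval_def)

lemma winv_right: "word_eval MA MB w ** word_eval MA MB (winv w) = mat 1"
proof (induction w)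
  case Nil then show ?case by (simp add: winv_def word_eval_def)
next
  case (Cons l w)
  have "word_eval MA MB (l # w) ** word_eval MA MB (winv (l # w)) =
     letter_eval MA MB l ** (word_eval MA MB w ** word_eval MA MB (winv w)) ** letter_eval MA MB (fst l, \<not> snd l)"
    by (simp add: winv_cons word_append word_cons word_single matrix_mul_assoc)
  also have "\<dots> = mat 1" using Cons.IH cancel[of l "(fst l, \<not> snd l)"] by simp
  finally show ?case .
qed

lemma winv_left: "word_eval MA MB (winv w) ** word_eval MA MB w = mat 1"
proof (induction w)
  case Nil then show ?case by (simp add: winv_def word_eval_def)
next
  case (Cons l w)
  have "word_eval MA MB (winv (l # w)) ** word_eval MA MB (l # w) =
     word_eval MA MB (winv w) ** (letter_eval MA MB (fst l, \<not> snd l) ** letter_eval MA MB l) ** word_eval MA MB w"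
    by (simp add: winv_cons word_append word_cons word_single matrix_mul_assoc)
  also have "\<dots> = mat 1" using Cons.IH cancel[of "(fst l, \<not> snd l)" l] by simp
  finally show ?case .
qed

lemma SL_mul: "X \<in> SL3Z \<Longrightarrow> Y \<in> SL3Z \<Longrightarrow> X ** Y \<in> SL3Z"
  unfolding SL3Z_def
proof (intro CollectI conjI allI)
  assume X: "X \<in> {A. (\<forall>i j. A $ i $ j \<in> \<int>) \<and> det A = 1}" and Y: "Y \<in> {A. (\<forall>i j. A $ i $ j \<in> \<int>) \<and> det A = 1}"
  show "det (X ** Y) = 1" using X Y by (simp add: det_mul)
  fix i j
  show "(X ** Y) $ i $ j \<in> \<int>" using X Y
    by (auto simp: matrix_matrix_mult_def intro!: Ints_sum Ints_mult)
qed

lemma SL_one: "mat 1 \<in> SL3Z"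
  unfolding SL3Z_def by (simp add: det_I) (simp add: mat_def)

lemma SL_letter: "letter_eval MA MB l \<in> SL3Z"
  apply (cases l) apply (rename_tac x e) apply (case_tac x; case_tac e)
  by (simp_all add: invA invB; simp add: SL3Z_def det_3 forall_3 MA_def MAi_def MB_def MBi_def)+

lemma SL_word: "word_eval MA MB w \<in> SL3Z"
  by (induction w) (simp_all add: word_cons SL_mul SL_letter, simp add: word_eval_def SL_one)

lemma fval: "(\<Sum>i\<in>UNIV. (vector [1, -2, 1] :: rat^3) $ i * (vec3 p q) $ i) = (p - q)^2"
  by (simp add: sum_3 vec3_def power2_eq_square algebra_simps)

lemma pos: "reduced_word w \<Longrightarrow> w \<noteq> [] \<Longrightarrow>
   (\<Sum>i\<in>UNIV. (vector [1, -2, 1] :: rat^3) $ i * (word_eval MA MB w *v uu) $ i) > 0"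
proof -
  assume "reduced_word w" "w \<noteq> []"
  from main[OF this] obtain p q where pq: "word_eval MA MB w *v uu = vec3 p q" "Inv (hd w) p q"
    by blast
  obtain x e where "hd w = (x, e)" by fastforce
  then have "p \<noteq> q" using pq(2) by (cases x; cases e) auto
  then show ?thesis unfolding pq(1) fval by simp
qed

theorem theorem7:
  shows "\<exists>(F :: (rat^3^3) set) (a :: rat^3^3) (b :: rat^3^3) (c :: rat^3) (u :: rat^3).
           subgroup_SL3Z F \<and> free_on_two F a b \<and>
           (\<forall>g\<in>F. (\<Sum>i\<in>UNIV. c $ i * (g *v u) $ i) \<ge> 0 \<and>
                   ((\<Sum>i\<in>UNIV. c $ i * (g *v u) $ i) = 0 \<longleftrightarrow> g = mat 1))"
proof (intro exI conjI)
  let ?F = "range (word_eval MA MB)"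
  let ?c = "vector [1, -2, 1] :: rat^3"
  have f1: "(\<Sum>i\<in>UNIV. ?c $ i * (mat 1 *v uu) $ i) = 0"
    by (simp add: fval uu_def)
  show "subgroup_SL3Z ?F"
    unfolding subgroup_SL3Z_def
  proof (intro conjI ballI)
    show "?F \<subseteq> SL3Z" using SL_word by blast
    show "mat 1 \<in> ?F" by (rule range_eqI[of _ _ "[]"]) (simp add: word_eval_def)
  next
    fix g h assume "g \<in> ?F" "h \<in> ?F"
    then obtain v w where "g = word_eval MA MB v" "h = word_eval MA MB w" by blast
    then show "g ** h \<in> ?F" by (metis rangeI word_append)
  next
    fix g assume "g \<in> ?F"
    then obtain v where v: "g = word_eval MA MB v" by blast
    have "matrix_inv g = word_eval MA MB (winv v)"
      unfolding v by (rule inv_eq) (simp_all add: winv_left winv_right)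
    then show "matrix_inv g \<in> ?F" by simp
  qed
  show "free_on_two ?F MA MB"
    unfolding free_on_two_def
  proof (intro conjI allI impI)
    fix w assume h: "reduced_word w \<and> w \<noteq> []"
    show "word_eval MA MB w \<noteq> mat 1"
      using pos[of w] h f1 by auto
  qed simp
  show "\<forall>g\<in>?F. (\<Sum>i\<in>UNIV. ?c $ i * (g *v uu) $ i) \<ge> 0 \<and>
                   ((\<Sum>i\<in>UNIV. ?c $ i * (g *v uu) $ i) = 0 \<longleftrightarrow> g = mat 1)"
  proof
    fix g assume "g \<in> ?F"
    then obtain w0 where "g = word_eval MA MB w0" by blast
    with reduce obtain w where w: "reduced_word w" "g = word_eval MA MB w" by metis
    show "(\<Sum>i\<in>UNIV. ?c $ i * (g *v uu) $ i) \<ge> 0 \<and>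
                   ((\<Sum>i\<in>UNIV. ?c $ i * (g *v uu) $ i) = 0 \<longleftrightarrow> g = mat 1)"
    proof (cases "w = []")
      case True
      then have "g = mat 1" using w by (simp add: word_eval_def)
      then show ?thesis using f1 by simp
    next
      case False
      have "(\<Sum>i\<in>UNIV. ?c $ i * (g *v uu) $ i) > 0" using pos[OF w(1) False] w(2) by simp
      moreover have "g \<noteq> mat 1" using calculation f1 by auto
      ultimately show ?thesis by simp
    qed
  qed
qed
end
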